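(* For $i\in\{1,2\}$, let $G_i$ be a graph with maximum degree $\Delta_i$ and degeneracy $d_i$ that contains $K_{s_i,t_i}$ as a subgraph, where $1\leq s_i\leq t_i$. Let $$f(s_1,t_1,s_2,t_2):=\max\{s_1+s_2+s_1s_2,\ \min\{t_1+t_2,\ s_1(t_2+1),\ s_2(t_1+1)\},\ \min\{s_1t_2,\ s_2t_1\}\}.$$ Then $$\max\{d_1+d_2+d_1d_2,\ f(s_1,t_1,s_2,t_2),\ \min\{\Delta_1,\Delta_2\}+1\}\ \leq\ \operatorname{degen}(G_1\boxtimes G_2)\ \leq\ d_1+d_2+\min\{d_1\Delta_2,\ d_2\Delta_1\}.$$
   Context: The degeneracy $\operatorname{degen}(G)$ of a graph $G$ is the minimum integer $d$ such that every subgraph of $G$ has minimum degree at most $d$. The strong product $G_1 \boxtimes G_2$ has vertex set $V(G_1)\times V(G_2)$, with distinct vertices $(a,v),(b,u)$ adjacent iff ($a=b$ or $ab\in E(G_1)$) and ($u=v$ or $uv\in E(G_2)$). *)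

theory Defs
  imports Main
begin

definition sgraph :: "'a set \<Rightarrow> ('a \<Rightarrow> 'a \<Rightarrow> bool) \<Rightarrow> bool" where
  "sgraph V E \<longleftrightarrow> finite V \<and> (\<forall>u v. E u v \<longrightarrow> u \<in> V \<and> v \<in> V)
     \<and> (\<forall>u v. E u v \<longrightarrow> E v u) \<and> (\<forall>v. \<not> E v v)"

definition degree :: "'a set \<Rightarrow> ('a \<Rightarrow> 'a \<Rightarrow> bool) \<Rightarrow> 'a \<Rightarrow> nat" where
  "degree V E v = card {u \<in> V. E v u}"

definition max_degree :: "'a set \<Rightarrow> ('a \<Rightarrow> 'a \<Rightarrow> bool) \<Rightarrow> nat" where
  "max_degree V E = Max (insert 0 (degree V E ` V))"

definition min_degree :: "'a set \<Rightarrow> ('a \<Rightarrow> 'a \<Rightarrow> bool) \<Rightarrow> nat" where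
  "min_degree V E = Min (degree V E ` V)"

definition subgraph :: "'a set \<Rightarrow> ('a \<Rightarrow> 'a \<Rightarrow> bool) \<Rightarrow> 'a set \<Rightarrow> ('a \<Rightarrow> 'a \<Rightarrow> bool) \<Rightarrow> bool" where
  "subgraph W F V E \<longleftrightarrow> sgraph W F \<and> W \<subseteq> V \<and> (\<forall>u v. F u v \<longrightarrow> E u v)"

definition degen :: "'a set \<Rightarrow> ('a \<Rightarrow> 'a \<Rightarrow> bool) \<Rightarrow> nat" where
  "degen V E = (LEAST d. \<forall>W F. subgraph W F V E \<and> W \<noteq> {} \<longrightarrow> min_degree W F \<le> d)"

definition strong_prod_V :: "'a set \<Rightarrow> 'b set \<Rightarrow> ('a \<times> 'b) set" where
  "strong_prod_V V1 V2 = V1 \<times> V2"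

definition strong_prod_E :: "'a set \<Rightarrow> ('a \<Rightarrow> 'a \<Rightarrow> bool) \<Rightarrow> 'b set \<Rightarrow> ('b \<Rightarrow> 'b \<Rightarrow> bool)
    \<Rightarrow> ('a \<times> 'b) \<Rightarrow> ('a \<times> 'b) \<Rightarrow> bool" where
  "strong_prod_E V1 E1 V2 E2 x y \<longleftrightarrow>
     x \<in> V1 \<times> V2 \<and> y \<in> V1 \<times> V2 \<and> x \<noteq> y \<and>
     (fst x = fst y \<or> E1 (fst x) (fst y)) \<and> (snd x = snd y \<or> E2 (snd x) (snd y))"

definition contains_Kst :: "'a set \<Rightarrow> ('a \<Rightarrow> 'a \<Rightarrow> bool) \<Rightarrow> nat \<Rightarrow> nat \<Rightarrow> bool" where
  "contains_Kst V E s t \<longleftrightarrow> (\<exists>A B. A \<subseteq> V \<and> B \<subseteq> V \<and> A \<inter> B = {} \<and> card A = s \<and> card B = t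
       \<and> (\<forall>a\<in>A. \<forall>b\<in>B. E a b))"

definition fKst :: "nat \<Rightarrow> nat \<Rightarrow> nat \<Rightarrow> nat \<Rightarrow> nat" where
  "fKst s1 t1 s2 t2 = max (s1 + s2 + s1 * s2)
      (max (min (t1 + t2) (min (s1 * (t2 + 1)) (s2 * (t1 + 1)))) (min (s1 * t2) (s2 * t1)))"

end

theory Submission
  imports Defs
begin

definition Pdeg :: "'a set \<Rightarrow> ('a \<Rightarrow> 'a \<Rightarrow> bool) \<Rightarrow> nat \<Rightarrow> bool" where
  "Pdeg V E d \<longleftrightarrow> (\<forall>W F. subgraph W F V E \<and> W \<noteq> {} \<longrightarrow> min_degree W F \<le> d)"

lemma degen_alt: "degen V E = (LEAST d. Pdeg V E d)"
  unfolding degen_def Pdeg_def by simp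

lemma min_degree_le:
  assumes "sgraph W F" "w \<in> W"
  shows "min_degree W F \<le> degree W F w"
  using assms unfolding min_degree_def sgraph_def by (intro Min_le) auto

lemma Pdeg_card: assumes "sgraph V E" shows "Pdeg V E (card V)"
  unfolding Pdeg_def
proof (intro allI impI)
  fix W F assume h: "subgraph W F V E \<and> W \<noteq> {}"
  then have sg: "sgraph W F" and WV: "W \<subseteq> V" unfolding subgraph_def by auto
  obtain w where w: "w \<in> W" using h by auto
  have fV: "finite V" using assms unfolding sgraph_def by auto
  have fW: "finite W" using sg unfolding sgraph_def by auto
  have "min_degree W F \<le> degree W F w" using min_degree_le[OF sg w] .
  also have "\<dots> \<le> card W" unfolding degree_def using fW by (intro card_mono) auto
  also have "\<dots> \<le> card V" using fV WV by (rule card_mono)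
  finally show "min_degree W F \<le> card V" .
qed

lemma degen_prop: assumes "sgraph V E" shows "Pdeg V E (degen V E)"
  unfolding degen_alt using Pdeg_card[OF assms] by (rule LeastI)

lemma degen_le: "Pdeg V E k \<Longrightarrow> degen V E \<le> k"
  unfolding degen_alt by (rule Least_le)

lemma card_nbr_ge:
  assumes "finite W" "S \<subseteq> W" "\<And>u. u \<in> S \<Longrightarrow> E v u" "k \<le> card S"
  shows "k \<le> card {u\<in>W. E v u}"
proof -
  have "card S \<le> card {u\<in>W. E v u}" using assms by (intro card_mono) auto
  then show ?thesis using assms(4) by simp
qed

lemma degen_ge:
  assumes "sgraph V E" "W \<subseteq> V" "W \<noteq> {}" "\<And>v. v \<in> W \<Longrightarrow> k \<le> card {u\<in>W. E v u}"
  shows "k \<le> degen V E"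
proof -
  define F where "F = (\<lambda>x y. E x y \<and> x \<in> W \<and> y \<in> W)"
  have fW: "finite W" using assms(1,2) finite_subset unfolding sgraph_def by auto
  have sg: "sgraph W F" using assms(1) fW unfolding sgraph_def F_def by auto
  have sub: "subgraph W F V E" using sg assms(2) unfolding subgraph_def F_def by auto
  have "k \<le> min_degree W F"
    unfolding min_degree_def
  proof (subst Min_ge_iff)
    show "finite (degree W F ` W)" using fW by simp
    show "degree W F ` W \<noteq> {}" using assms(3) by simp
    show "\<forall>a\<in>degree W F ` W. k \<le> a"
    proof
      fix a assume "a \<in> degree W F ` W"
      then obtain v where v: "v \<in> W" "a = degree W F v" by auto
      have "{u\<in>W. F v u} = {u\<in>W. E v u}" using v unfolding F_def by auto
      then show "k \<le> a" using assms(4)[OF v(1)] v unfolding degree_def by simp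
    qed
  qed
  also have "\<dots> \<le> degen V E" using degen_prop[OF assms(1)] sub assms(3) unfolding Pdeg_def by blast
  finally show ?thesis .
qed

lemma degen_witness:
  assumes "sgraph V E" "V \<noteq> {}"
  shows "\<exists>W\<subseteq>V. W \<noteq> {} \<and> (\<forall>v\<in>W. degen V E \<le> card {u\<in>W. E v u})"
proof (cases "degen V E = 0")
  case True then show ?thesis using assms(2) by auto
next
  case False
  have "\<not> Pdeg V E (degen V E - 1)"
  proof
    assume "Pdeg V E (degen V E - 1)"
    then have "degen V E \<le> degen V E - 1" by (rule degen_le)
    then show False using False by simp
  qed
  then obtain W F where WF: "subgraph W F V E" "W \<noteq> {}" "\<not> min_degree W F \<le> degen V E - 1"
    unfolding Pdeg_def by blast
  have sg: "sgraph W F" and WV: "W \<subseteq> V" and FE: "\<And>u v. F u v \<Longrightarrow> E u v"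
    using WF(1) unfolding subgraph_def by auto
  have fW: "finite W" using sg unfolding sgraph_def by auto
  show ?thesis
  proof (intro exI[of _ W] conjI ballI WV WF(2))
    fix v assume v: "v \<in> W"
    have "degen V E \<le> min_degree W F" using WF(3) by simp
    also have "\<dots> \<le> degree W F v" by (rule min_degree_le[OF sg v])
    also have "\<dots> \<le> card {u\<in>W. E v u}" unfolding degree_def using fW FE by (intro card_mono) auto
    finally show "degen V E \<le> card {u\<in>W. E v u}" .
  qed
qed

lemma degen_low_vertex:
  assumes "sgraph V E" "A \<subseteq> V" "A \<noteq> {}"
  shows "\<exists>a\<in>A. card {u\<in>A. E a u} \<le> degen V E"
proof -
  define F where "F = (\<lambda>x y. E x y \<and> x \<in> A \<and> y \<in> A)"
  have fA: "finite A" using assms(1,2) finite_subset unfolding sgraph_def by auto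
  have sg: "sgraph A F" using assms(1) fA unfolding sgraph_def F_def by auto
  have sub: "subgraph A F V E" using sg assms(2) unfolding subgraph_def F_def by auto
  have md: "min_degree A F \<le> degen V E" using degen_prop[OF assms(1)] sub assms(3) unfolding Pdeg_def by blast
  have "min_degree A F \<in> degree A F ` A" unfolding min_degree_def using fA assms(3) by (intro Min_in) auto
  then obtain a where a: "a \<in> A" "min_degree A F = degree A F a" by auto
  have "{u\<in>A. F a u} = {u\<in>A. E a u}" using a unfolding F_def by auto
  then show ?thesis using a md unfolding degree_def by auto
qed

lemma degree_le_max: assumes "sgraph V E" "v \<in> V" shows "degree V E v \<le> max_degree V E"
  using assms unfolding max_degree_def sgraph_def by (intro Max_ge) auto

lemma nbr_le_max: assumes "sgraph V E" shows "card {u. E v u} \<le> max_degree V E"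
proof (cases "v \<in> V")
  case True
  have "{u. E v u} = {u\<in>V. E v u}" using assms unfolding sgraph_def by auto
  then show ?thesis using degree_le_max[OF assms True] unfolding degree_def by simp
next
  case False
  then have "{u. E v u} = {}" using assms unfolding sgraph_def by auto
  then show ?thesis by simp
qed

lemma prod_sgraph:
  assumes "sgraph V1 E1" "sgraph V2 E2"
  shows "sgraph (strong_prod_V V1 V2) (strong_prod_E V1 E1 V2 E2)"
  using assms unfolding sgraph_def strong_prod_V_def strong_prod_E_def by auto

lemma spE: "strong_prod_E V1 E1 V2 E2 (a,b) (x,y) \<longleftrightarrow>
   a \<in> V1 \<and> b \<in> V2 \<and> x \<in> V1 \<and> y \<in> V2 \<and> (a,b) \<noteq> (x,y) \<and> (a = x \<or> E1 a x) \<and> (b = y \<or> E2 b y)"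
  unfolding strong_prod_E_def by auto

lemma prod_ge:
  assumes g1: "sgraph V1 E1" and g2: "sgraph V2 E2"
    and W1: "W1 \<subseteq> V1" "W1 \<noteq> {}" "\<And>v. v \<in> W1 \<Longrightarrow> k1 \<le> card {u\<in>W1. E1 v u}"
    and W2: "W2 \<subseteq> V2" "W2 \<noteq> {}" "\<And>v. v \<in> W2 \<Longrightarrow> k2 \<le> card {u\<in>W2. E2 v u}"
  shows "k1 + k2 + k1 * k2 \<le> degen (strong_prod_V V1 V2) (strong_prod_E V1 E1 V2 E2)"
proof (rule degen_ge[OF prod_sgraph[OF g1 g2]])
  have f1: "finite W1" using g1 W1(1) finite_subset unfolding sgraph_def by auto
  have f2: "finite W2" using g2 W2(1) finite_subset unfolding sgraph_def by auto
  show "W1 \<times> W2 \<subseteq> strong_prod_V V1 V2" using W1 W2 unfolding strong_prod_V_def by auto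
  show "W1 \<times> W2 \<noteq> {}" using W1 W2 by auto
  fix v assume v: "v \<in> W1 \<times> W2"
  then obtain a b where ab: "v = (a,b)" "a \<in> W1" "b \<in> W2" by auto
  define N1 where "N1 = {u\<in>W1. E1 a u}"
  define N2 where "N2 = {u\<in>W2. E2 b u}"
  have aN1: "a \<notin> N1" using g1 unfolding N1_def sgraph_def by auto
  have bN2: "b \<notin> N2" using g2 unfolding N2_def sgraph_def by auto
  have fN1: "finite N1" using f1 unfolding N1_def by auto
  have fN2: "finite N2" using f2 unfolding N2_def by auto
  define S where "S = (insert a N1 \<times> insert b N2) - {(a,b)}"
  have cS: "card S = (card N1 + 1) * (card N2 + 1) - 1"
  proof -
    have "card S = card (insert a N1 \<times> insert b N2) - 1"
      unfolding S_def by (rule card_Diff_singleton) (use fN1 fN2 in auto)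
    also have "card (insert a N1 \<times> insert b N2) = (card N1 + 1) * (card N2 + 1)"
      unfolding card_cartesian_product using fN1 fN2 aN1 bN2 by simp
    finally show ?thesis .
  qed
  have k1: "k1 \<le> card N1" using W1(3)[OF ab(2)] unfolding N1_def .
  have k2: "k2 \<le> card N2" using W2(3)[OF ab(3)] unfolding N2_def .
  have "(k1+1)*(k2+1) \<le> (card N1 + 1) * (card N2 + 1)" using k1 k2 by (intro mult_le_mono) auto
  then have kS: "k1 + k2 + k1 * k2 \<le> card S" using cS by (simp add: algebra_simps)
  show "k1 + k2 + k1 * k2 \<le> card {u \<in> W1 \<times> W2. strong_prod_E V1 E1 V2 E2 v u}"
  proof (rule card_nbr_ge[OF _ _ _ kS])
    show "finite (W1 \<times> W2)" using f1 f2 by simp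
    show "S \<subseteq> W1 \<times> W2" unfolding S_def N1_def N2_def using ab by auto
    fix u assume "u \<in> S"
    then obtain x y where "u = (x,y)" "x \<in> insert a N1" "y \<in> insert b N2" "(x,y) \<noteq> (a,b)"
      unfolding S_def by auto
    then show "strong_prod_E V1 E1 V2 E2 v u" unfolding N1_def N2_def
      using ab W1(1) W2(1) by (auto simp: spE)
  qed
qed

lemma upper1:
  assumes g1: "sgraph V1 E1" and g2: "sgraph V2 E2"
  shows "degen (strong_prod_V V1 V2) (strong_prod_E V1 E1 V2 E2)
     \<le> degen V1 E1 + degen V2 E2 + degen V1 E1 * max_degree V2 E2"
  unfolding Pdeg_def[symmetric]
proof (rule degen_le, unfold Pdeg_def, intro allI impI)
  fix W F assume h: "subgraph W F (strong_prod_V V1 V2) (strong_prod_E V1 E1 V2 E2) \<and> W \<noteq> {}"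
  then have sg: "sgraph W F" and WV: "W \<subseteq> V1 \<times> V2"
    and FE: "\<And>u v. F u v \<Longrightarrow> strong_prod_E V1 E1 V2 E2 u v" and Wne: "W \<noteq> {}"
    unfolding subgraph_def strong_prod_V_def by auto
  have fW: "finite W" using sg unfolding sgraph_def by auto
  define A where "A = fst ` W"
  have AV: "A \<subseteq> V1" using WV unfolding A_def by auto
  have fA: "finite A" using fW unfolding A_def by auto
  obtain a where a: "a \<in> A" "card {u\<in>A. E1 a u} \<le> degen V1 E1"
    using degen_low_vertex[OF g1 AV] Wne unfolding A_def by auto
  define B where "B = {b. (a,b) \<in> W}"
  have BV: "B \<subseteq> V2" using WV unfolding B_def by auto
  have fB: "finite B" using BV g2 finite_subset unfolding sgraph_def by auto
  have Bne: "B \<noteq> {}" using a(1) unfolding A_def B_def by force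
  obtain b where b: "b \<in> B" "card {u\<in>B. E2 b u} \<le> degen V2 E2"
    using degen_low_vertex[OF g2 BV Bne] by auto
  have abW: "(a,b) \<in> W" using b unfolding B_def by auto
  define X where "X = {a} \<times> {u\<in>B. E2 b u}"
  define Y where "Y = {u\<in>A. E1 a u} \<times> insert b {u. E2 b u}"
  have fN2: "finite {u. E2 b u}" using g2 unfolding sgraph_def
    by (metis (no_types, lifting) finite_subset mem_Collect_eq subsetI)
  have "{u\<in>W. F (a,b) u} \<subseteq> X \<union> Y"
  proof
    fix u assume u: "u \<in> {u\<in>W. F (a,b) u}"
    obtain x y where xy: "u = (x,y)" by (cases u)
    have uW: "(x,y) \<in> W" and E: "strong_prod_E V1 E1 V2 E2 (a,b) (x,y)" using u FE xy by auto
    show "u \<in> X \<union> Y"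
    proof (cases "x = a")
      case True
      then show ?thesis using E uW unfolding xy X_def B_def spE by auto
    next
      case False
      then have "x \<in> A" "E1 a x" using E uW unfolding A_def spE by force+
      then show ?thesis using E False unfolding xy Y_def spE by auto
    qed
  qed
  then have "card {u\<in>W. F (a,b) u} \<le> card (X \<union> Y)" using fB fA fN2
    unfolding X_def Y_def by (intro card_mono) auto
  also have "\<dots> \<le> card X + card Y" by (rule card_Un_le)
  also have "card X = card {u\<in>B. E2 b u}" unfolding X_def by (simp add: card_cartesian_product)
  also have "card Y = card {u\<in>A. E1 a u} * card (insert b {u. E2 b u})"
    unfolding Y_def by (simp add: card_cartesian_product)
  also have "card (insert b {u. E2 b u}) \<le> max_degree V2 E2 + 1"
    using card_insert_le_m1 nbr_le_max[OF g2, of b] fN2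
    by (metis Suc_eq_plus1 add_le_mono1 card_insert_if le_SucI)
  finally have "card {u\<in>W. F (a,b) u} \<le> card {u\<in>B. E2 b u} + card {u\<in>A. E1 a u} * (max_degree V2 E2 + 1)"
    by (simp add: mult_le_mono)
  also have "\<dots> \<le> degen V2 E2 + degen V1 E1 * (max_degree V2 E2 + 1)"
    using a b by (intro add_mono mult_le_mono) auto
  finally have "degree W F (a,b) \<le> degen V1 E1 + degen V2 E2 + degen V1 E1 * max_degree V2 E2"
    unfolding degree_def by (simp add: algebra_simps)
  then show "min_degree W F \<le> degen V1 E1 + degen V2 E2 + degen V1 E1 * max_degree V2 E2"
    using min_degree_le[OF sg abW] by simp
qed

lemma upper2:
  assumes g1: "sgraph V1 E1" and g2: "sgraph V2 E2"
  shows "degen (strong_prod_V V1 V2) (strong_prod_E V1 E1 V2 E2)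
     \<le> degen V1 E1 + degen V2 E2 + degen V2 E2 * max_degree V1 E1"
  unfolding Pdeg_def[symmetric]
proof (rule degen_le, unfold Pdeg_def, intro allI impI)
  fix W F assume h: "subgraph W F (strong_prod_V V1 V2) (strong_prod_E V1 E1 V2 E2) \<and> W \<noteq> {}"
  then have sg: "sgraph W F" and WV: "W \<subseteq> V1 \<times> V2"
    and FE: "\<And>u v. F u v \<Longrightarrow> strong_prod_E V1 E1 V2 E2 u v" and Wne: "W \<noteq> {}"
    unfolding subgraph_def strong_prod_V_def by auto
  have fW: "finite W" using sg unfolding sgraph_def by auto
  define A where "A = snd ` W"
  have AV: "A \<subseteq> V2" using WV unfolding A_def by auto
  have fA: "finite A" using fW unfolding A_def by auto
  obtain a where a: "a \<in> A" "card {u\<in>A. E2 a u} \<le> degen V2 E2"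
    using degen_low_vertex[OF g2 AV] Wne unfolding A_def by auto
  define B where "B = {b. (b,a) \<in> W}"
  have BV: "B \<subseteq> V1" using WV unfolding B_def by auto
  have fB: "finite B" using BV g1 finite_subset unfolding sgraph_def by auto
  have Bne: "B \<noteq> {}" using a(1) unfolding A_def B_def by force
  obtain b where b: "b \<in> B" "card {u\<in>B. E1 b u} \<le> degen V1 E1"
    using degen_low_vertex[OF g1 BV Bne] by auto
  have abW: "(b,a) \<in> W" using b unfolding B_def by auto
  define X where "X = {u\<in>B. E1 b u} \<times> {a}"
  define Y where "Y = insert b {u. E1 b u} \<times> {u\<in>A. E2 a u}"
  have fN2: "finite {u. E1 b u}" using g1 unfolding sgraph_def
    by (metis (no_types, lifting) finite_subset mem_Collect_eq subsetI)
  have "{u\<in>W. F (b,a) u} \<subseteq> X \<union> Y"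
  proof
    fix u assume u: "u \<in> {u\<in>W. F (b,a) u}"
    obtain x y where xy: "u = (x,y)" by (cases u)
    have uW: "(x,y) \<in> W" and E: "strong_prod_E V1 E1 V2 E2 (b,a) (x,y)" using u FE xy by auto
    show "u \<in> X \<union> Y"
    proof (cases "y = a")
      case True
      then show ?thesis using E uW unfolding xy X_def B_def spE by auto
    next
      case False
      then have "y \<in> A" "E2 a y" using E uW unfolding A_def spE by force+
      then show ?thesis using E False unfolding xy Y_def spE by auto
    qed
  qed
  then have "card {u\<in>W. F (b,a) u} \<le> card (X \<union> Y)" using fB fA fN2
    unfolding X_def Y_def by (intro card_mono) auto
  also have "\<dots> \<le> card X + card Y" by (rule card_Un_le)
  also have "card X = card {u\<in>B. E1 b u}" unfolding X_def by (simp add: card_cartesian_product)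
  also have "card Y = card (insert b {u. E1 b u}) * card {u\<in>A. E2 a u}"
    unfolding Y_def by (simp add: card_cartesian_product)
  also have "card (insert b {u. E1 b u}) \<le> max_degree V1 E1 + 1"
    using card_insert_le_m1 nbr_le_max[OF g1, of b] fN2
    by (metis Suc_eq_plus1 add_le_mono1 card_insert_if le_SucI)
  finally have "card {u\<in>W. F (b,a) u} \<le> card {u\<in>B. E1 b u} + (max_degree V1 E1 + 1) * card {u\<in>A. E2 a u}"
    by (simp add: mult_le_mono)
  also have "\<dots> \<le> degen V1 E1 + (max_degree V1 E1 + 1) * degen V2 E2"
    using a b by (intro add_mono mult_le_mono) auto
  finally have "degree W F (b,a) \<le> degen V1 E1 + degen V2 E2 + degen V2 E2 * max_degree V1 E1"
    unfolding degree_def by (simp add: algebra_simps)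
  then show "min_degree W F \<le> degen V1 E1 + degen V2 E2 + degen V2 E2 * max_degree V1 E1"
    using min_degree_le[OF sg abW] by simp
qed

lemma Kst_parts:
  assumes "contains_Kst V E s t" "1 \<le> s" "s \<le> t" "sgraph V E"
  obtains A B where "A \<subseteq> V" "B \<subseteq> V" "A \<inter> B = {}" "card A = s" "card B = t"
    "\<And>a b. a \<in> A \<Longrightarrow> b \<in> B \<Longrightarrow> E a b" "\<And>a b. a \<in> A \<Longrightarrow> b \<in> B \<Longrightarrow> E b a"
    "finite A" "finite B" "A \<noteq> {}" "B \<noteq> {}"
proof -
  obtain A B where h: "A \<subseteq> V" "B \<subseteq> V" "A \<inter> B = {}" "card A = s" "card B = t"
    "\<forall>a\<in>A. \<forall>b\<in>B. E a b" using assms(1) unfolding contains_Kst_def by blast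
  have fV: "finite V" using assms(4) unfolding sgraph_def by auto
  show ?thesis
    apply (rule that[OF h(1-5)])
    using h assms fV finite_subset unfolding sgraph_def by fastforce+
qed

lemma Kst_mindeg:
  assumes "contains_Kst V E s t" "1 \<le> s" "s \<le> t" "sgraph V E"
  shows "\<exists>W\<subseteq>V. W \<noteq> {} \<and> (\<forall>v\<in>W. s \<le> card {u\<in>W. E v u})"
proof -
  obtain A B where K: "A \<subseteq> V" "B \<subseteq> V" "A \<inter> B = {}" "card A = s" "card B = t"
    "\<And>a b. a \<in> A \<Longrightarrow> b \<in> B \<Longrightarrow> E a b" "\<And>a b. a \<in> A \<Longrightarrow> b \<in> B \<Longrightarrow> E b a"
    "finite A" "finite B" "A \<noteq> {}" "B \<noteq> {}"
    using Kst_parts[OF assms] by blast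
  show ?thesis
  proof (intro exI[of _ "A \<union> B"] conjI ballI)
    show "A \<union> B \<subseteq> V" "A \<union> B \<noteq> {}" using K by auto
    fix v assume v: "v \<in> A \<union> B"
    show "s \<le> card {u\<in>A \<union> B. E v u}"
    proof (cases "v \<in> A")
      case True
      show ?thesis by (rule card_nbr_ge[of _ B]) (use K True assms(3) in auto)
    next
      case False
      show ?thesis by (rule card_nbr_ge[of _ A]) (use K False v in auto)
    qed
  qed
qed

lemma delta_part:
  assumes g1: "sgraph V1 E1" and g2: "sgraph V2 E2"
    and e1: "E1 p1 q1" and e2: "E2 p2 q2"
  shows "min (max_degree V1 E1) (max_degree V2 E2) + 1
          \<le> degen (strong_prod_V V1 V2) (strong_prod_E V1 E1 V2 E2)"
proof -
  have fV1: "finite V1" using g1 unfolding sgraph_def by auto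
  have fV2: "finite V2" using g2 unfolding sgraph_def by auto
  have p1: "p1 \<in> V1" using g1 e1 unfolding sgraph_def by auto
  have p2: "p2 \<in> V2" using g2 e2 unfolding sgraph_def by auto
  have "max_degree V1 E1 \<in> insert 0 (degree V1 E1 ` V1)"
    unfolding max_degree_def using fV1 by (intro Max_in) auto
  then obtain v1 where v1: "v1 \<in> V1" "degree V1 E1 v1 = max_degree V1 E1"
    using degree_le_max[OF g1 p1] p1 by (metis image_iff insertE le_zero_eq)
  have "max_degree V2 E2 \<in> insert 0 (degree V2 E2 ` V2)"
    unfolding max_degree_def using fV2 by (intro Max_in) auto
  then obtain v2 where v2: "v2 \<in> V2" "degree V2 E2 v2 = max_degree V2 E2"
    using degree_le_max[OF g2 p2] p2 by (metis image_iff insertE le_zero_eq)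
  define N1 where "N1 = {u\<in>V1. E1 v1 u}"
  define N2 where "N2 = {u\<in>V2. E2 v2 u}"
  have cN1: "card N1 = max_degree V1 E1" using v1 unfolding N1_def degree_def by simp
  have cN2: "card N2 = max_degree V2 E2" using v2 unfolding N2_def degree_def by simp
  have fN1: "finite N1" using fV1 unfolding N1_def by auto
  have fN2: "finite N2" using fV2 unfolding N2_def by auto
  have v1N: "v1 \<notin> N1" using g1 unfolding N1_def sgraph_def by auto
  have v2N: "v2 \<notin> N2" using g2 unfolding N2_def sgraph_def by auto
  have d1: "1 \<le> max_degree V1 E1"
  proof -
    have "q1 \<in> {u\<in>V1. E1 p1 u}" using g1 e1 unfolding sgraph_def by auto
    then have "1 \<le> degree V1 E1 p1" unfolding degree_def using fV1
      by (metis (no_types, lifting) One_nat_def Suc_leI card_gt_0_iff empty_iff finite_subset mem_Collect_eq subsetI)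
    then show ?thesis using degree_le_max[OF g1 p1] by simp
  qed
  have sym1: "\<And>x y. E1 x y \<Longrightarrow> E1 y x" and sym2: "\<And>x y. E2 x y \<Longrightarrow> E2 y x"
    using g1 g2 unfolding sgraph_def by auto
  have irr1: "\<And>x. \<not> E1 x x" and irr2: "\<And>x. \<not> E2 x x" using g1 g2 unfolding sgraph_def by auto
  define W where "W = insert (v1,v2) ({v1} \<times> N2 \<union> N1 \<times> {v2})"
  have fW: "finite W" unfolding W_def using fN1 fN2 by auto
  show ?thesis
  proof (rule degen_ge[OF prod_sgraph[OF g1 g2]])
    show "W \<subseteq> strong_prod_V V1 V2" unfolding W_def strong_prod_V_def N1_def N2_def using v1 v2 by auto
    show "W \<noteq> {}" unfolding W_def by auto
    fix v assume v: "v \<in> W"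
    consider "v = (v1,v2)" | y where "y \<in> N2" "v = (v1,y)" | x where "x \<in> N1" "v = (x,v2)"
      using v unfolding W_def by auto
    then show "min (max_degree V1 E1) (max_degree V2 E2) + 1 \<le> card {u \<in> W. strong_prod_E V1 E1 V2 E2 v u}"
    proof cases
      case 1
      have c: "card ({v1} \<times> N2 \<union> N1 \<times> {v2}) = max_degree V2 E2 + max_degree V1 E1"
        using fN1 fN2 v1N cN1 cN2 by (subst card_Un_disjoint) (auto simp: card_cartesian_product)
      show ?thesis
        by (rule card_nbr_ge[OF fW, of "{v1} \<times> N2 \<union> N1 \<times> {v2}"])
          (use 1 c d1 v1 v2 irr1 irr2 in \<open>auto simp: W_def N1_def N2_def spE\<close>)
    next
      case 2
      have c: "card (insert (v1,v2) (N1 \<times> {v2})) = max_degree V1 E1 + 1"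
        using fN1 v1N cN1 by (simp add: card_cartesian_product)
      show ?thesis
        by (rule card_nbr_ge[OF fW, of "insert (v1,v2) (N1 \<times> {v2})"])
          (use 2 c v1 v2 irr1 irr2 sym2 in \<open>auto simp: W_def N1_def N2_def spE\<close>)
    next
      case 3
      have c: "card (insert (v1,v2) ({v1} \<times> N2)) = max_degree V2 E2 + 1"
        using fN2 v2N cN2 by (simp add: card_cartesian_product)
      show ?thesis
        by (rule card_nbr_ge[OF fW, of "insert (v1,v2) ({v1} \<times> N2)"])
          (use 3 c v1 v2 irr1 irr2 sym1 in \<open>auto simp: W_def N1_def N2_def spE\<close>)
    qed
  qed
qed

lemma adjI: "a \<in> V1 \<Longrightarrow> b \<in> V2 \<Longrightarrow> x \<in> V1 \<Longrightarrow> y \<in> V2 \<Longrightarrow> b \<noteq> y \<or> a \<noteq> x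
   \<Longrightarrow> (a = x \<or> E1 a x) \<Longrightarrow> (b = y \<or> E2 b y) \<Longrightarrow> strong_prod_E V1 E1 V2 E2 (a,b) (x,y)"
  unfolding strong_prod_E_def by auto

lemma f_parts:
  assumes g1: "sgraph V1 E1" and g2: "sgraph V2 E2"
    and st1: "1 \<le> s1" "s1 \<le> t1" and st2: "1 \<le> s2" "s2 \<le> t2"
    and K1: "contains_Kst V1 E1 s1 t1" and K2: "contains_Kst V2 E2 s2 t2"
  shows "min (t1 + t2) (min (s1 * (t2 + 1)) (s2 * (t1 + 1)))
            \<le> degen (strong_prod_V V1 V2) (strong_prod_E V1 E1 V2 E2)"
    and "min (s1 * t2) (s2 * t1) \<le> degen (strong_prod_V V1 V2) (strong_prod_E V1 E1 V2 E2)"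
proof -
  obtain A1 B1 where P1: "A1 \<subseteq> V1" "B1 \<subseteq> V1" "A1 \<inter> B1 = {}" "card A1 = s1" "card B1 = t1"
    "\<And>a b. a \<in> A1 \<Longrightarrow> b \<in> B1 \<Longrightarrow> E1 a b" "\<And>a b. a \<in> A1 \<Longrightarrow> b \<in> B1 \<Longrightarrow> E1 b a"
    "finite A1" "finite B1" "A1 \<noteq> {}" "B1 \<noteq> {}"
    using Kst_parts[OF K1 st1 g1] by blast
  obtain A2 B2 where P2: "A2 \<subseteq> V2" "B2 \<subseteq> V2" "A2 \<inter> B2 = {}" "card A2 = s2" "card B2 = t2"
    "\<And>a b. a \<in> A2 \<Longrightarrow> b \<in> B2 \<Longrightarrow> E2 a b" "\<And>a b. a \<in> A2 \<Longrightarrow> b \<in> B2 \<Longrightarrow> E2 b a"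
    "finite A2" "finite B2" "A2 \<noteq> {}" "B2 \<noteq> {}"
    using Kst_parts[OF K2 st2 g2] by blast
  let ?m = "min (t1 + t2) (min (s1 * (t2 + 1)) (s2 * (t1 + 1)))"
  define W where "W = A1 \<times> A2 \<union> A1 \<times> B2 \<union> B1 \<times> A2"
  have fW: "finite W" unfolding W_def using P1 P2 by auto
  show "?m \<le> degen (strong_prod_V V1 V2) (strong_prod_E V1 E1 V2 E2)"
  proof (rule degen_ge[OF prod_sgraph[OF g1 g2]])
    show "W \<subseteq> strong_prod_V V1 V2" unfolding W_def strong_prod_V_def using P1 P2 by auto
    show "W \<noteq> {}" unfolding W_def using P1 P2 by auto
    fix v assume v: "v \<in> W"
    consider a b where "a \<in> A1" "b \<in> A2" "v = (a,b)" | a b where "a \<in> A1" "b \<in> B2" "v = (a,b)"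
      | a b where "a \<in> B1" "b \<in> A2" "v = (a,b)"
      using v unfolding W_def by auto
    then show "?m \<le> card {u \<in> W. strong_prod_E V1 E1 V2 E2 v u}"
    proof cases
      case 1
      have c: "card ({a} \<times> B2 \<union> B1 \<times> {b}) = t2 + t1"
        using P1 P2 1 by (subst card_Un_disjoint) (auto simp: card_cartesian_product)
      show ?thesis
      proof (rule card_nbr_ge[OF fW, of "{a} \<times> B2 \<union> B1 \<times> {b}"])
        show "{a} \<times> B2 \<union> B1 \<times> {b} \<subseteq> W" using 1(1,2) unfolding W_def by blast
        show "?m \<le> card ({a} \<times> B2 \<union> B1 \<times> {b})" using c by (simp add: algebra_simps)
        fix u assume u: "u \<in> {a} \<times> B2 \<union> B1 \<times> {b}"
        then obtain x y where xy: "u = (x,y)" by (cases u)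
        show "strong_prod_E V1 E1 V2 E2 v u" unfolding xy 1(3)
          by (rule adjI) (use u xy 1 P1 P2 in auto)
      qed
    next
      case 2
      have "b \<notin> A2" using 2 P2 by auto
      have "a \<notin> B1" using 2 P1 by auto
      have c: "card (insert a B1 \<times> A2) = (t1 + 1) * s2"
        unfolding card_cartesian_product using P1 P2 \<open>a \<notin> B1\<close> by simp
      show ?thesis
      proof (rule card_nbr_ge[OF fW, of "insert a B1 \<times> A2"])
        show "insert a B1 \<times> A2 \<subseteq> W" using 2(1,2) unfolding W_def by blast
        show "?m \<le> card (insert a B1 \<times> A2)" using c by (simp add: algebra_simps)
        fix u assume u: "u \<in> insert a B1 \<times> A2"
        then obtain x y where xy: "u = (x,y)" by (cases u)
        show "strong_prod_E V1 E1 V2 E2 v u" unfolding xy 2(3)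
          by (rule adjI) (use u xy 2 P1 P2 \<open>b \<notin> A2\<close> \<open>a \<notin> B1\<close> in auto)
      qed
    next
      case 3
      have "b \<notin> B2" using 3 P2 by auto
      have "a \<notin> A1" using 3 P1 by auto
      have c: "card (A1 \<times> insert b B2) = s1 * (t2 + 1)"
        unfolding card_cartesian_product using P1 P2 \<open>b \<notin> B2\<close> by simp
      show ?thesis
      proof (rule card_nbr_ge[OF fW, of "A1 \<times> insert b B2"])
        show "A1 \<times> insert b B2 \<subseteq> W" using 3(1,2) unfolding W_def by blast
        show "?m \<le> card (A1 \<times> insert b B2)" using c by (simp add: algebra_simps)
        fix u assume u: "u \<in> A1 \<times> insert b B2"
        then obtain x y where xy: "u = (x,y)" by (cases u)
        show "strong_prod_E V1 E1 V2 E2 v u" unfolding xy 3(3)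
          by (rule adjI) (use u xy 3 P1 P2 \<open>b \<notin> B2\<close> \<open>a \<notin> A1\<close> in auto)
      qed
    qed
  qed
  define W' where "W' = A1 \<times> B2 \<union> B1 \<times> A2"
  have fW': "finite W'" unfolding W'_def using P1 P2 by auto
  show "min (s1 * t2) (s2 * t1) \<le> degen (strong_prod_V V1 V2) (strong_prod_E V1 E1 V2 E2)"
  proof (rule degen_ge[OF prod_sgraph[OF g1 g2]])
    show "W' \<subseteq> strong_prod_V V1 V2" unfolding W'_def strong_prod_V_def using P1 P2 by auto
    show "W' \<noteq> {}" unfolding W'_def using P1 P2 by auto
    fix v assume v: "v \<in> W'"
    consider a b where "a \<in> A1" "b \<in> B2" "v = (a,b)"
      | a b where "a \<in> B1" "b \<in> A2" "v = (a,b)"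
      using v unfolding W'_def by auto
    then show "min (s1 * t2) (s2 * t1) \<le> card {u \<in> W'. strong_prod_E V1 E1 V2 E2 v u}"
    proof cases
      case 1
      have "a \<notin> B1" using 1 P1 by auto
      have c: "card (B1 \<times> A2) = t1 * s2" using P1 P2 by (simp add: card_cartesian_product)
      show ?thesis
      proof (rule card_nbr_ge[OF fW', of "B1 \<times> A2"])
        show "B1 \<times> A2 \<subseteq> W'" using 1(1,2) unfolding W'_def by blast
        show "min (s1 * t2) (s2 * t1) \<le> card (B1 \<times> A2)" using c by (simp add: algebra_simps)
        fix u assume u: "u \<in> B1 \<times> A2"
        then obtain x y where xy: "u = (x,y)" by (cases u)
        show "strong_prod_E V1 E1 V2 E2 v u" unfolding xy 1(3)
          by (rule adjI) (use u xy 1 P1 P2 \<open>a \<notin> B1\<close> in auto)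
      qed
    next
      case 2
      have "a \<notin> A1" using 2 P1 by auto
      have c: "card (A1 \<times> B2) = s1 * t2" using P1 P2 by (simp add: card_cartesian_product)
      show ?thesis
      proof (rule card_nbr_ge[OF fW', of "A1 \<times> B2"])
        show "A1 \<times> B2 \<subseteq> W'" using 2(1,2) unfolding W'_def by blast
        show "min (s1 * t2) (s2 * t1) \<le> card (A1 \<times> B2)" using c by (simp add: algebra_simps)
        fix u assume u: "u \<in> A1 \<times> B2"
        then obtain x y where xy: "u = (x,y)" by (cases u)
        show "strong_prod_E V1 E1 V2 E2 v u" unfolding xy 2(3)
          by (rule adjI) (use u xy 2 P1 P2 \<open>a \<notin> A1\<close> in auto)
      qed
    qed
  qed
qed

theorem mainTheorem7:
  fixes V1 :: "'a set" and E1 :: "'a \<Rightarrow> 'a \<Rightarrow> bool"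
    and V2 :: "'b set" and E2 :: "'b \<Rightarrow> 'b \<Rightarrow> bool"
    and s1 t1 s2 t2 :: nat
  assumes g1: "sgraph V1 E1" and g2: "sgraph V2 E2"
    and st1: "1 \<le> s1" "s1 \<le> t1" and st2: "1 \<le> s2" "s2 \<le> t2"
    and K1: "contains_Kst V1 E1 s1 t1" and K2: "contains_Kst V2 E2 s2 t2"
  shows "max (degen V1 E1 + degen V2 E2 + degen V1 E1 * degen V2 E2)
            (max (fKst s1 t1 s2 t2) (min (max_degree V1 E1) (max_degree V2 E2) + 1))
          \<le> degen (strong_prod_V V1 V2) (strong_prod_E V1 E1 V2 E2)
       \<and> degen (strong_prod_V V1 V2) (strong_prod_E V1 E1 V2 E2)
          \<le> degen V1 E1 + degen V2 E2
             + min (degen V1 E1 * max_degree V2 E2) (degen V2 E2 * max_degree V1 E1)"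
proof -
  let ?D = "degen (strong_prod_V V1 V2) (strong_prod_E V1 E1 V2 E2)"
  obtain A1 B1 where P1: "A1 \<subseteq> V1" "B1 \<subseteq> V1" "A1 \<inter> B1 = {}" "card A1 = s1" "card B1 = t1"
    "\<And>a b. a \<in> A1 \<Longrightarrow> b \<in> B1 \<Longrightarrow> E1 a b" "\<And>a b. a \<in> A1 \<Longrightarrow> b \<in> B1 \<Longrightarrow> E1 b a"
    "finite A1" "finite B1" "A1 \<noteq> {}" "B1 \<noteq> {}"
    using Kst_parts[OF K1 st1 g1] by blast
  obtain A2 B2 where P2: "A2 \<subseteq> V2" "B2 \<subseteq> V2" "A2 \<inter> B2 = {}" "card A2 = s2" "card B2 = t2"
    "\<And>a b. a \<in> A2 \<Longrightarrow> b \<in> B2 \<Longrightarrow> E2 a b" "\<And>a b. a \<in> A2 \<Longrightarrow> b \<in> B2 \<Longrightarrow> E2 b a"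
    "finite A2" "finite B2" "A2 \<noteq> {}" "B2 \<noteq> {}"
    using Kst_parts[OF K2 st2 g2] by blast
  obtain p1 q1 where e1: "E1 p1 q1" using P1 by blast
  obtain p2 q2 where e2: "E2 p2 q2" using P2 by blast
  have ne1: "V1 \<noteq> {}" using P1 by auto
  have ne2: "V2 \<noteq> {}" using P2 by auto
  have L1: "degen V1 E1 + degen V2 E2 + degen V1 E1 * degen V2 E2 \<le> ?D"
  proof -
    obtain W1 where w1: "W1 \<subseteq> V1" "W1 \<noteq> {}" "\<forall>v\<in>W1. degen V1 E1 \<le> card {u\<in>W1. E1 v u}"
      using degen_witness[OF g1 ne1] by blast
    obtain W2 where w2: "W2 \<subseteq> V2" "W2 \<noteq> {}" "\<forall>v\<in>W2. degen V2 E2 \<le> card {u\<in>W2. E2 v u}"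
      using degen_witness[OF g2 ne2] by blast
    show ?thesis by (rule prod_ge[OF g1 g2 w1(1,2) _ w2(1,2)]) (use w1(3) w2(3) in auto)
  qed
  have L2: "s1 + s2 + s1 * s2 \<le> ?D"
  proof -
    obtain W1 where w1: "W1 \<subseteq> V1" "W1 \<noteq> {}" "\<forall>v\<in>W1. s1 \<le> card {u\<in>W1. E1 v u}"
      using Kst_mindeg[OF K1 st1 g1] by blast
    obtain W2 where w2: "W2 \<subseteq> V2" "W2 \<noteq> {}" "\<forall>v\<in>W2. s2 \<le> card {u\<in>W2. E2 v u}"
      using Kst_mindeg[OF K2 st2 g2] by blast
    show ?thesis by (rule prod_ge[OF g1 g2 w1(1,2) _ w2(1,2)]) (use w1(3) w2(3) in auto)
  qed
  note L3 = f_parts[OF g1 g2 st1 st2 K1 K2]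
  note L4 = delta_part[OF g1 g2 e1 e2]
  note U1 = upper1[OF g1 g2]
  note U2 = upper2[OF g1 g2]
  have F: "fKst s1 t1 s2 t2 \<le> ?D" unfolding fKst_def
    by (intro max.boundedI) (use L2 L3 in auto)
  have U: "?D \<le> degen V1 E1 + degen V2 E2
             + min (degen V1 E1 * max_degree V2 E2) (degen V2 E2 * max_degree V1 E1)"
    using U1 U2 by (simp add: min_def)
  show ?thesis
    by (intro conjI max.boundedI L1 F L4 U)
qed

end
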